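(* Let $G$ be a graph, let $k\ge 1$ and $d\ge 0$ be integers, and let $\mathcal M$ be a family of non-trivial vertex-disjoint paths in $G$ which is a size-minimum $(d,k)$-extension of itself. Then: (1) no path in $\mathcal M$ has length less than $2k-1$; and (2) for every two distinct paths $P_1,P_2\in\mathcal M$, every vertex $x$ in the $k$-end of $P_1$, every vertex $y$ in the $k$-end of $P_2$, every $a\in N(x)\setminus V(\mathcal M)$ and every $b\in N(y)\setminus V(\mathcal M)$, there is no $ab$-path of length at most $d$ in $G-V(\mathcal M)$.
   Context: A path is non-trivial if its length (number of edges) is at least $1$. For a family $\mathcal M$ of vertex-disjoint paths, $|\mathcal M|$ is the number of paths, $V(\mathcal M)$ the union of their vertex sets and $E(\mathcal M)$ the union of their edge sets. The $k$-end of a path is the set of (at most $2k$) vertices of the path at distance at most $k-1$ along the path from one of its two endpoints (endpoints included). Given a family $\mathcal M$ of non-trivial vertex-disjoint paths, a family $\mathcal M'$ of non-trivial vertex-disjoint paths is a $(d,k)$-extension of $\mathcal M$ if $\mu:=|\mathcal M|-|\mathcal M'|\ge 0$, $|E(\mathcal M)\setminus E(\mathcal M')|\le 2(k-1)\mu$ and $|E(\mathcal M')\setminus E(\mathcal M)|\le (d+2)\mu$. $\mathcal M'$ is a size-minimum $(d,k)$-extension of $\mathcal M$ if it is a $(d,k)$-extension of $\mathcal M$ and every $(d,k)$-extension $\mathcal M''$ of $\mathcal M$ satisfies $|\mathcal M''|\ge|\mathcal M'|$. $N(x)$ denotes the set of neighbors of $x$. *)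

theory Defs
  imports Main
begin

definition graph :: "'a set \<Rightarrow> 'a set set \<Rightarrow> bool" where
  "graph V E \<longleftrightarrow> finite V \<and> (\<forall>e\<in>E. \<exists>u v. e = {u, v} \<and> u \<noteq> v \<and> u \<in> V \<and> v \<in> V)"

definition nbrs :: "'a set set \<Rightarrow> 'a \<Rightarrow> 'a set" where
  "nbrs E x = {a. {x, a} \<in> E}"

definition is_path :: "'a set \<Rightarrow> 'a set set \<Rightarrow> 'a list \<Rightarrow> bool" where
  "is_path V E p \<longleftrightarrow> p \<noteq> [] \<and> distinct p \<and> set p \<subseteq> V \<and>
     (\<forall>i. Suc i < length p \<longrightarrow> {p ! i, p ! Suc i} \<in> E)"

definition path_len :: "'a list \<Rightarrow> nat" where
  "path_len p = length p - 1"

definition path_edges :: "'a list \<Rightarrow> 'a set set" where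
  "path_edges p = {{p ! i, p ! Suc i} | i. Suc i < length p}"

definition path_family :: "'a set \<Rightarrow> 'a set set \<Rightarrow> 'a list set \<Rightarrow> bool" where
  "path_family V E M \<longleftrightarrow> finite M \<and>
     (\<forall>p\<in>M. is_path V E p \<and> path_len p \<ge> 1) \<and>
     (\<forall>p\<in>M. \<forall>q\<in>M. p \<noteq> q \<longrightarrow> set p \<inter> set q = {})"

definition VM :: "'a list set \<Rightarrow> 'a set" where
  "VM M = (\<Union>p\<in>M. set p)"

definition EM :: "'a list set \<Rightarrow> 'a set set" where
  "EM M = (\<Union>p\<in>M. path_edges p)"

definition extension :: "'a set \<Rightarrow> 'a set set \<Rightarrow> nat \<Rightarrow> nat \<Rightarrow> 'a list set \<Rightarrow> 'a list set \<Rightarrow> bool" where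
  "extension V E d k M M' \<longleftrightarrow> path_family V E M' \<and> card M' \<le> card M \<and>
     card (EM M - EM M') \<le> 2 * (k - 1) * (card M - card M') \<and>
     card (EM M' - EM M) \<le> (d + 2) * (card M - card M')"

definition size_min_extension :: "'a set \<Rightarrow> 'a set set \<Rightarrow> nat \<Rightarrow> nat \<Rightarrow> 'a list set \<Rightarrow> 'a list set \<Rightarrow> bool" where
  "size_min_extension V E d k M M' \<longleftrightarrow> extension V E d k M M' \<and>
     (\<forall>M''. extension V E d k M M'' \<longrightarrow> card M'' \<ge> card M')"

definition k_end :: "nat \<Rightarrow> 'a list \<Rightarrow> 'a set" where
  "k_end k p = {p ! i | i. i < length p \<and> (i \<le> k - 1 \<or> length p - 1 - i \<le> k - 1)}"

end

theory Submission
  imports Defs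
begin

lemma pe_nil[simp]: "path_edges [] = {}" by (simp add: path_edges_def)
lemma pe_single[simp]: "path_edges [x] = {}" by (simp add: path_edges_def)
lemma pe_cons2[simp]: "path_edges (x#y#zs) = insert {x,y} (path_edges (y#zs))"
  unfolding path_edges_def
proof (intro equalityI subsetI)
  fix e assume "e \<in> {{(x#y#zs) ! i, (x#y#zs) ! Suc i} |i. Suc i < length (x#y#zs)}"
  then obtain i where "e = {(x#y#zs) ! i, (x#y#zs) ! Suc i}" "Suc i < length (x#y#zs)" by blast
  then show "e \<in> insert {x, y} {{(y # zs) ! i, (y # zs) ! Suc i} |i. Suc i < length (y # zs)}"
    by (cases i) auto
next
  fix e assume "e \<in> insert {x, y} {{(y # zs) ! i, (y # zs) ! Suc i} |i. Suc i < length (y # zs)}"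
  then show "e \<in> {{(x#y#zs) ! i, (x#y#zs) ! Suc i} |i. Suc i < length (x#y#zs)}"
  proof
    assume "e = {x,y}" then show ?thesis by (auto intro!: exI[of _ 0])
  next
    assume "e \<in> {{(y # zs) ! i, (y # zs) ! Suc i} |i. Suc i < length (y # zs)}"
    then obtain i where "e = {(y#zs) ! i, (y#zs) ! Suc i}" "Suc i < length (y#zs)" by blast
    then show ?thesis by (auto intro!: exI[of _ "Suc i"])
  qed
qed

lemma pe_cons: "path_edges (x # zs) = (if zs = [] then {} else insert {x, hd zs} (path_edges zs))"
  by (cases zs) auto

lemma pe_append: "path_edges (xs @ ys) = path_edges xs \<union> path_edges ys \<union>
   (if xs = [] \<or> ys = [] then {} else {{last xs, hd ys}})"
  by (induction xs) (auto simp: pe_cons)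

lemma pe_rev: "path_edges (rev xs) = path_edges xs"
  by (induction xs) (auto simp: pe_append pe_cons last_rev insert_commute)

lemma pe_finite_card: "finite (path_edges xs) \<and> card (path_edges xs) \<le> length xs - 1"
proof (induction xs)
  case Nil then show ?case by simp
next
  case (Cons x xs)
  then show ?case by (cases xs) (auto simp: pe_cons card_insert_if)
qed

lemma pe_split: "i < length xs \<Longrightarrow> path_edges xs = path_edges (take (Suc i) xs) \<union> path_edges (drop i xs)"
proof (induction xs arbitrary: i)
  case Nil then show ?case by simp
next
  case (Cons x xs)
  show ?case
  proof (cases i)
    case 0 then show ?thesis by simp
  next
    case (Suc i')
    with Cons have "i' < length xs" by simp
    then have ne: "xs \<noteq> []" by auto
    have "hd (take (Suc i') xs) = hd xs" using ne by (cases xs) auto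
    then show ?thesis using Cons.IH[OF \<open>i' < length xs\<close>] Suc ne
      by (auto simp: pe_cons)
  qed
qed

lemma is_path_alt: "is_path V E p \<longleftrightarrow> p \<noteq> [] \<and> distinct p \<and> set p \<subseteq> V \<and> path_edges p \<subseteq> E"
  unfolding is_path_def path_edges_def by auto

lemma k_end_orient:
  assumes "x \<in> k_end k P"
  shows "\<exists>A i. (A = P \<or> A = rev P) \<and> i < length A \<and> i \<le> k - 1 \<and> A ! i = x"
proof -
  obtain i where i: "x = P ! i" "i < length P" "i \<le> k - 1 \<or> length P - 1 - i \<le> k - 1"
    using assms unfolding k_end_def by blast
  show ?thesis
  proof (cases "i \<le> k - 1")
    case True then show ?thesis using i by blast
  next
    case False
    then have "length P - 1 - i \<le> k - 1" using i by auto
    moreover have "rev P ! (length P - 1 - i) = x" using i by (simp add: rev_nth Suc_diff_Suc)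
    ultimately show ?thesis using i by (intro exI[of _ "rev P"] exI[of _ "length P - 1 - i"]) auto
  qed
qed

lemma EM_insert: "EM (insert p R) = path_edges p \<union> EM R" by (simp add: EM_def)
lemma VM_insert: "VM (insert p R) = set p \<union> VM R" by (simp add: VM_def)

lemma merge:
  assumes pf: "path_family V E M" and P1: "P1 \<in> M" and P2: "P2 \<in> M" and ne: "P1 \<noteq> P2"
    and A: "A = P1 \<or> A = rev P1" and i: "i < length A" "A ! i = x"
    and B: "B = P2 \<or> B = rev P2" and j: "j < length B" "B ! j = y"
    and xa: "{x,a} \<in> E" and yb: "{y,b} \<in> E"
    and q: "is_path (V - VM M) E q" "hd q = a" "last q = b"
    and ij: "i + j \<le> 2 * (k - 1)" and ql: "path_len q \<le> d"
  shows "extension V E d k M (insert (rev (drop i A) @ q @ drop j B) (M - {P1,P2}))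
     \<and> card (insert (rev (drop i A) @ q @ drop j B) (M - {P1,P2})) < card M"
proof -
  define R where "R = M - {P1,P2}"
  define N where "N = rev (drop i A) @ q @ drop j B"
  have finM: "finite M" using pf by (simp add: path_family_def)
  have MR: "M = insert P1 (insert P2 R)" using P1 P2 R_def by auto
  have p1: "is_path V E P1" and p2: "is_path V E P2" using pf P1 P2 by (auto simp: path_family_def)
  have disj: "\<And>p p'. p \<in> M \<Longrightarrow> p' \<in> M \<Longrightarrow> p \<noteq> p' \<Longrightarrow> set p \<inter> set p' = {}"
    using pf by (auto simp: path_family_def)
  have sA: "set A = set P1" "distinct A" "path_edges A = path_edges P1"
    using A p1 by (auto simp: is_path_alt pe_rev)
  have sB: "set B = set P2" "distinct B" "path_edges B = path_edges P2"
    using B p2 by (auto simp: is_path_alt pe_rev)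
  have qp: "q \<noteq> []" "distinct q" "set q \<subseteq> V - VM M" "path_edges q \<subseteq> E"
    using q by (auto simp: is_path_alt)
  have VM1: "set P1 \<subseteq> VM M" "set P2 \<subseteq> VM M" using P1 P2 by (auto simp: VM_def)
  have d1: "drop i A \<noteq> []" "hd (drop i A) = x" using i by (auto simp: hd_drop_conv_nth)
  have d2: "drop j B \<noteq> []" "hd (drop j B) = y" using j by (auto simp: hd_drop_conv_nth)
  have peN: "path_edges N = path_edges (drop i A) \<union> path_edges q \<union> path_edges (drop j B) \<union> {{x,a},{b,y}}"
    unfolding N_def using d1 d2 qp q by (auto simp: pe_append pe_rev last_rev)
  have spA: "path_edges A = path_edges (take (Suc i) A) \<union> path_edges (drop i A)"
    using pe_split[OF i(1)] .
  have spB: "path_edges B = path_edges (take (Suc j) B) \<union> path_edges (drop j B)"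
    using pe_split[OF j(1)] .
  have setN: "set N = set (drop i A) \<union> set q \<union> set (drop j B)" unfolding N_def by auto
  have sdA: "set (drop i A) \<subseteq> set P1" using sA set_drop_subset by metis
  have sdB: "set (drop j B) \<subseteq> set P2" using sB set_drop_subset by metis
  have d12: "set P1 \<inter> set P2 = {}" using disj P1 P2 ne by blast
  have pathN: "is_path V E N"
    unfolding is_path_alt
  proof (intro conjI)
    show "N \<noteq> []" using d1 unfolding N_def by simp
    show "distinct N" unfolding N_def using sA(2) sB(2) qp sdA sdB d12 VM1
      by (auto simp: distinct_drop)
    show "set N \<subseteq> V" using setN sdA sdB p1 p2 qp by (auto simp: is_path_alt)
    have "path_edges (drop i A) \<subseteq> E" using spA sA p1 by (auto simp: is_path_alt)
    moreover have "path_edges (drop j B) \<subseteq> E" using spB sB p2 by (auto simp: is_path_alt)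
    moreover have "{b,y} \<in> E" using yb by (simp add: insert_commute)
    ultimately show "path_edges N \<subseteq> E" using peN qp xa by auto
  qed
  have lenN: "path_len N \<ge> 1" unfolding N_def path_len_def using d1 d2 by simp
  have xN: "x \<in> set N" unfolding N_def using d1 by (auto simp: hd_in_set[OF d1(1), simplified d1(2)] )
  have xP1: "x \<in> set P1" using i sA by (metis nth_mem)
  have NR: "N \<notin> R"
  proof
    assume "N \<in> R"
    then have "N \<in> M" "N \<noteq> P1" unfolding R_def by auto
    then have "set N \<inter> set P1 = {}" using disj P1 by blast
    then show False using xN xP1 by blast
  qed
  have finR: "finite R" using finM R_def by simp
  have "P1 \<notin> insert P2 R" "P2 \<notin> R" using ne R_def by auto
  then have cardM: "card M = Suc (Suc (card R))" using MR finR by (metis card_insert_disjoint finite_insert)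
  have cardM': "card (insert N R) = Suc (card R)" using NR finR by simp
  have famM': "path_family V E (insert N R)"
    unfolding path_family_def
  proof (intro conjI ballI impI)
    show "finite (insert N R)" using finR by simp
  next
    fix p assume "p \<in> insert N R"
    then show "is_path V E p" using pathN pf R_def by (auto simp: path_family_def)
  next
    fix p assume "p \<in> insert N R"
    then show "1 \<le> path_len p" using lenN pf R_def by (auto simp: path_family_def)
  next
    fix p p' assume pp: "p \<in> insert N R" "p' \<in> insert N R" "p \<noteq> p'"
    have gen: "set N \<inter> set r = {}" if "r \<in> R" for r
    proof -
      have "r \<in> M" "r \<noteq> P1" "r \<noteq> P2" using that R_def by auto
      then have "set r \<inter> set P1 = {}" "set r \<inter> set P2 = {}" "set r \<subseteq> VM M"
        using disj P1 P2 by (auto simp: VM_def)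
      then show ?thesis using setN sdA sdB qp by auto
    qed
    show "set p \<inter> set p' = {}"
    proof (cases "p = N \<or> p' = N")
      case True then show ?thesis using pp gen by auto
    next
      case False then have "p \<in> M" "p' \<in> M" using pp R_def by auto
      then show ?thesis using disj pp(3) by blast
    qed
  qed
  have EMM: "EM M = path_edges P1 \<union> path_edges P2 \<union> EM R" using MR by (simp add: EM_insert Un_assoc)
  have EMM': "EM (insert N R) = path_edges N \<union> EM R" by (simp add: EM_insert)
  have rem: "EM M - EM (insert N R) \<subseteq> path_edges (take (Suc i) A) \<union> path_edges (take (Suc j) B)"
    using EMM EMM' peN spA spB sA sB by auto
  have c1: "card (path_edges (take (Suc i) A)) \<le> i" "finite (path_edges (take (Suc i) A))"
    using pe_finite_card[of "take (Suc i) A"] i by auto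
  have c2: "card (path_edges (take (Suc j) B)) \<le> j" "finite (path_edges (take (Suc j) B))"
    using pe_finite_card[of "take (Suc j) B"] j by auto
  have "card (EM M - EM (insert N R)) \<le> card (path_edges (take (Suc i) A) \<union> path_edges (take (Suc j) B))"
    using rem c1 c2 by (intro card_mono) auto
  also have "\<dots> \<le> i + j" using c1 c2 card_Un_le[of "path_edges (take (Suc i) A)" "path_edges (take (Suc j) B)"] by linarith
  finally have r1: "card (EM M - EM (insert N R)) \<le> 2 * (k - 1) * (card M - card (insert N R))"
    using ij cardM cardM' by simp
  have add: "EM (insert N R) - EM M \<subseteq> path_edges q \<union> {{x,a},{b,y}}"
    using EMM EMM' peN spA spB sA sB by auto
  have c3: "card (path_edges q) \<le> path_len q" "finite (path_edges q)"
    using pe_finite_card[of q] by (auto simp: path_len_def)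
  have "card (EM (insert N R) - EM M) \<le> card (path_edges q \<union> {{x,a},{b,y}})"
    using add c3 by (intro card_mono) auto
  also have "\<dots> \<le> card (path_edges q) + card {{x,a},{b,y}}" by (rule card_Un_le)
  also have "\<dots> \<le> d + 2" using c3 ql card_le_Suc0_iff_eq[of "{{x,a},{b,y}}"]
    by (simp add: card_insert_if) linarith?
  finally have r2: "card (EM (insert N R) - EM M) \<le> (d + 2) * (card M - card (insert N R))"
    using cardM cardM' by simp
  show ?thesis
    using famM' r1 r2 cardM cardM' unfolding extension_def N_def[symmetric] R_def[symmetric] by simp
qed

theorem lemma2p3:
  fixes V :: "'a set" and E :: "'a set set" and d k :: nat and M :: "'a list set"
  assumes "graph V E" and "k \<ge> 1"
    and "path_family V E M"
    and "size_min_extension V E d k M M"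
  shows "(\<forall>P\<in>M. \<not> path_len P < 2 * k - 1) \<and>
    (\<forall>P1\<in>M. \<forall>P2\<in>M. \<forall>x y a b. P1 \<noteq> P2 \<longrightarrow> x \<in> k_end k P1 \<longrightarrow> y \<in> k_end k P2 \<longrightarrow>
       a \<in> nbrs E x - VM M \<longrightarrow> b \<in> nbrs E y - VM M \<longrightarrow>
       \<not> (\<exists>q. is_path (V - VM M) E q \<and> hd q = a \<and> last q = b \<and> path_len q \<le> d))"
proof (intro conjI ballI allI impI notI)
  have minM: "\<And>M''. extension V E d k M M'' \<Longrightarrow> card M'' \<ge> card M"
    using assms(4) by (simp add: size_min_extension_def)
  have pf: "path_family V E M" by fact
  have finM: "finite M" using pf by (simp add: path_family_def)
  {
    fix P assume P: "P \<in> M" and sh: "path_len P < 2 * k - 1"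
    define M' where "M' = M - {P}"
    have "card M > 0" using P finM by (auto simp: card_gt_0_iff)
    then have c: "card M' = card M - 1" "card M' < card M" using P finM unfolding M'_def
      by (auto simp: card_Diff_singleton)
    have pf': "path_family V E M'" using pf unfolding M'_def path_family_def by auto
    have EMM: "EM M = path_edges P \<union> EM M'" using P unfolding M'_def EM_def by auto
    have fc: "finite (path_edges P)" "card (path_edges P) \<le> path_len P"
      using pe_finite_card[of P] by (auto simp: path_len_def)
    have "card (EM M - EM M') \<le> card (path_edges P)" using EMM fc by (intro card_mono) auto
    also have "\<dots> \<le> 2 * (k - 1)" using fc sh by linarith
    finally have r1: "card (EM M - EM M') \<le> 2 * (k - 1) * (card M - card M')" using c by simp
    have "EM M' - EM M = {}" using EMM by auto
    then have r2: "card (EM M' - EM M) = 0" by (metis card.empty)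
    have "extension V E d k M M'" unfolding extension_def using pf' c r1 r2 by simp
    then show False using minM c by fastforce
  }
  fix P1 P2 x y a b
  assume P1: "P1 \<in> M" and P2: "P2 \<in> M" and ne: "P1 \<noteq> P2" and x: "x \<in> k_end k P1"
    and y: "y \<in> k_end k P2" and a: "a \<in> nbrs E x - VM M" and b: "b \<in> nbrs E y - VM M"
    and "\<exists>q. is_path (V - VM M) E q \<and> hd q = a \<and> last q = b \<and> path_len q \<le> d"
  then obtain q where q: "is_path (V - VM M) E q" "hd q = a" "last q = b" "path_len q \<le> d" by blast
  obtain A i where A: "A = P1 \<or> A = rev P1" "i < length A" "i \<le> k - 1" "A ! i = x"
    using k_end_orient[OF x] by blast
  obtain B j where B: "B = P2 \<or> B = rev P2" "j < length B" "j \<le> k - 1" "B ! j = y"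
    using k_end_orient[OF y] by blast
  have "{x,a} \<in> E" "{y,b} \<in> E" using a b by (auto simp: nbrs_def)
  from merge[OF pf P1 P2 ne A(1,2,4) B(1,2,4) this q(1,2,3), of k d] A(3) B(3) q(4)
  show False using minM by fastforce
qed

end
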